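(* For every $\alpha\in\{1,\dots,r+1\}$ and every $n\in\mathbb Z$, $$R_{\alpha,n}=\det_{1\le i,j\le \alpha}\bigl(R_{1,\,n+i+j-1-\alpha}\bigr).$$ In particular, since $R_{r+1,n}=1$, one has $\det_{1\le i,j\le r+1}(R_{1,n+i+j-r-2})=1$ for all $n\in\mathbb Z$.
   Context: Fix an integer $r\ge1$ and let $I_r=\{1,\dots,r\}$. Let $R_{1,0},\dots,R_{r,0},R_{1,1},\dots,R_{r,1}$ be $2r$ algebraically independent indeterminates over $\mathbb Q$. The (renormalized) $A_r$ $Q$-system is the unique family $(R_{\alpha,n})_{0\le\alpha\le r+1,\ n\in\mathbb Z}$ of nonzero elements of the field $\mathbb Q(R_{1,0},\dots,R_{r,1})$ with these initial values, $R_{0,n}=R_{r+1,n}=1$ for all $n$, and $$R_{\alpha,n+1}R_{\alpha,n-1}=R_{\alpha,n}^2+R_{\alpha+1,n}R_{\alpha-1,n}\qquad(\alpha\in I_r,\ n\in\mathbb Z),$$ the relation being solved forward and backward in $n$. *)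

theory Defs
  imports "Jordan_Normal_Form.Determinant"
begin

text \<open>A polynomial is given by a finite set S of exponent vectors (supported in I)
  and rational coefficients c.\<close>
definition alg_indep_Q :: "('i \<Rightarrow> 'a::field_char_0) \<Rightarrow> 'i set \<Rightarrow> bool" where
  "alg_indep_Q x I \<longleftrightarrow>
     (\<forall>(S :: ('i \<Rightarrow> nat) set) (c :: ('i \<Rightarrow> nat) \<Rightarrow> rat).
        finite S \<longrightarrow> (\<forall>e\<in>S. \<forall>i. i \<notin> I \<longrightarrow> e i = 0) \<longrightarrow>
        (\<Sum>e\<in>S. of_rat (c e) * (\<Prod>i\<in>I. x i ^ e i)) = 0 \<longrightarrow>
        (\<forall>e\<in>S. c e = 0))"

definition is_Q_system :: "nat \<Rightarrow> (nat \<Rightarrow> int \<Rightarrow> 'a::field) \<Rightarrow> bool" where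
  "is_Q_system r R \<longleftrightarrow>
     (\<forall>a n. a \<le> r + 1 \<longrightarrow> R a n \<noteq> 0) \<and>
     (\<forall>n. R 0 n = 1 \<and> R (r + 1) n = 1) \<and>
     (\<forall>a n. 1 \<le> a \<and> a \<le> r \<longrightarrow>
        R a (n + 1) * R a (n - 1) = (R a n)^2 + R (a + 1) n * R (a - 1) n)"

text \<open>Hankel-type determinant det_{1<=i,j<=alpha} (R_{1, n+i+j-1-alpha}),
  written with 0-based indices i,j < alpha.\<close>
definition hankel_det :: "(nat \<Rightarrow> int \<Rightarrow> 'a::comm_ring_1) \<Rightarrow> nat \<Rightarrow> int \<Rightarrow> 'a" where
  "hankel_det R a n = det (mat a a (\<lambda>(i, j). R 1 (n + int i + int j + 1 - int a)))"

end

theory Submission imports Defs "Jordan_Normal_Form.Char_Poly" begin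

lemma det_single_col:
  assumes A: "(A :: 'a :: comm_ring_1 mat) \<in> carrier_mat n n" and j: "j < n" and i: "i < n"
    and z: "\<And>i'. i' < n \<Longrightarrow> i' \<noteq> i \<Longrightarrow> A $$ (i',j) = 0"
  shows "det A = A $$ (i,j) * cofactor A i j"
proof -
  have "det A = (\<Sum>i'<n. A $$ (i',j) * cofactor A i' j)" by (rule laplace_expansion_column[OF A j])
  also have "\<dots> = (\<Sum>i'<n. if i' = i then A $$ (i,j) * cofactor A i j else 0)"
    by (rule sum.cong) (auto simp: z)
  finally show ?thesis using i by simp
qed

lemma det_single_row:
  assumes A: "(A :: 'a :: comm_ring_1 mat) \<in> carrier_mat n n" and j: "j < n" and i: "i < n"
    and z: "\<And>j'. j' < n \<Longrightarrow> j' \<noteq> j \<Longrightarrow> A $$ (i,j') = 0"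
  shows "det A = A $$ (i,j) * cofactor A i j"
proof -
  have "det A = (\<Sum>j'<n. A $$ (i,j') * cofactor A i j')" by (rule laplace_expansion_row[OF A i])
  also have "\<dots> = (\<Sum>j'<n. if j' = j then A $$ (i,j) * cofactor A i j else 0)"
    by (rule sum.cong) (auto simp: z)
  finally show ?thesis using j by simp
qed

lemma det_zero_col:
  assumes A: "(A :: 'a :: comm_ring_1 mat) \<in> carrier_mat n n" and j: "j < n"
    and z: "\<And>i'. i' < n \<Longrightarrow> A $$ (i',j) = 0"
  shows "det A = 0"
  using laplace_expansion_column[OF A j] z by simp

definition center :: "'a mat \<Rightarrow> nat \<Rightarrow> 'a mat" where
  "center A m = mat m m (\<lambda>(i,j). A $$ (Suc i, Suc j))"

lemma DJ_weak:
  fixes A :: "'a :: comm_ring_1 mat"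
  assumes A: "A \<in> carrier_mat (Suc (Suc m)) (Suc (Suc m))"
  shows "det A * (det (mat_delete A 0 0) * det (mat_delete A (Suc m) (Suc m))
          - det (mat_delete A 0 (Suc m)) * det (mat_delete A (Suc m) 0))
         = det A ^ 2 * det (center A m)"
proof -
  define n where "n = Suc (Suc m)"
  define k where "k = Suc m"
  define d where "d = det A"
  have An: "A \<in> carrier_mat n n" using A n_def by simp
  define M' where "M' = mat n n (\<lambda>(i,j). if j = 0 then cofactor A 0 i else if j = k then cofactor A k i
      else (if i = j then 1 else 0))"
  have M'c: "M' \<in> carrier_mat n n" unfolding M'_def by simp
  have adj: "A * adj_mat A = d \<cdot>\<^sub>m 1\<^sub>m n" using adj_mat(2)[OF An] d_def by simp
  define P where "P = mat n n (\<lambda>(i,j). if j = 0 then (if i = 0 then d else 0)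
      else if j = k then (if i = k then d else 0) else A $$ (i,j))"
  have AP: "A * M' = P"
  proof (rule eq_matI)
    fix i j assume i: "i < dim_row P" and j: "j < dim_col P"
    hence i': "i < n" and j': "j < n" unfolding P_def by auto
    have e: "(A * M') $$ (i,j) = (\<Sum>l<n. A $$ (i,l) * M' $$ (l,j))"
      using An M'c i' j' by (simp add: times_mat_def scalar_prod_def atLeast0LessThan)
    have ea: "(A * adj_mat A) $$ (i,j) = (\<Sum>l<n. A $$ (i,l) * cofactor A j l)"
      using An i' j' by (simp add: times_mat_def scalar_prod_def atLeast0LessThan adj_mat_def)
    show "(A * M') $$ (i,j) = P $$ (i,j)"
    proof (cases "j = 0 \<or> j = k")
      case True
      have "(A * M') $$ (i,j) = (A * adj_mat A) $$ (i,j)" unfolding e ea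
        by (rule sum.cong, insert True j', auto simp: M'_def k_def)
      also have "\<dots> = (if i = j then d else 0)" unfolding adj using i' j' by simp
      finally show ?thesis using True i' j' unfolding P_def k_def by auto
    next
      case False
      have "(A * M') $$ (i,j) = (\<Sum>l<n. if l = j then A $$ (i,j) else 0)" unfolding e
        by (rule sum.cong, insert False j', auto simp: M'_def)
      also have "\<dots> = A $$ (i,j)" using j' by simp
      finally show ?thesis using False i' j' unfolding P_def by auto
    qed
  qed (insert An, auto simp: P_def M'_def)
  have Pc: "P \<in> carrier_mat n n" unfolding P_def by simp
  have dP: "det P = d^2 * det (center A m)"
  proof -
    have "det P = P $$ (0,0) * cofactor P 0 0"
      by (rule det_single_col[OF Pc], auto simp: n_def P_def k_def)
    also have "\<dots> = d * det (mat_delete P 0 0)" by (simp add: P_def n_def cofactor_def)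
    also have "det (mat_delete P 0 0) = (mat_delete P 0 0) $$ (m,m) * cofactor (mat_delete P 0 0) m m"
      by (rule det_single_col[of _ "Suc m"], auto simp: mat_delete_def n_def P_def k_def)
    also have "\<dots> = d * det (center A m)"
    proof -
      have "mat_delete (mat_delete P 0 0) m m = center A m"
        by (rule eq_matI, auto simp: mat_delete_def n_def P_def k_def center_def)
      thus ?thesis by (simp add: cofactor_def mat_delete_def n_def P_def k_def)
    qed
    finally show ?thesis by (simp add: power2_eq_square)
  qed
  have dM': "det M' = det (mat_delete A 0 0) * det (mat_delete A (Suc m) (Suc m))
          - det (mat_delete A 0 (Suc m)) * det (mat_delete A (Suc m) 0)"
  proof -
    have "det M' = (\<Sum>i<n. M' $$ (i,k) * cofactor M' i k)"
      by (rule laplace_expansion_column[OF M'c], simp add: n_def k_def)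
    also have "\<dots> = (\<Sum>i<n. if i = 0 then M' $$ (0,k) * cofactor M' 0 k else
        if i = k then M' $$ (k,k) * cofactor M' k k else 0)"
    proof (rule sum.cong)
      fix i assume "i \<in> {..<n}"
      hence i: "i < n" by simp
      show "M' $$ (i,k) * cofactor M' i k = (if i = 0 then M' $$ (0,k) * cofactor M' 0 k else
        if i = k then M' $$ (k,k) * cofactor M' k k else 0)"
      proof (cases "i = 0 \<or> i = k")
        case False
        have "det (mat_delete M' i k) = 0"
          by (rule det_zero_col[of _ "Suc m" "i"], insert False i,
              auto simp: mat_delete_def M'_def n_def k_def)
        thus ?thesis using False by (simp add: cofactor_def)
      qed auto
    qed simp
    also have "\<dots> = M' $$ (0,k) * cofactor M' 0 k + M' $$ (k,k) * cofactor M' k k"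
      by (simp add: sum.If_cases n_def k_def)
    finally have E: "det M' = M' $$ (0,k) * cofactor M' 0 k + M' $$ (k,k) * cofactor M' k k" .
    have D1: "det (mat_delete M' k k) = cofactor A 0 0"
    proof -
      define B where "B = mat_delete M' k k"
      have Bc: "B \<in> carrier_mat k k" unfolding B_def using M'c by (auto simp: n_def k_def mat_delete_def)
      have h1: "det B = B $$ (0,0) * cofactor B 0 0"
        by (rule det_single_row[OF Bc], auto simp: B_def k_def mat_delete_def M'_def n_def)
      have h2: "mat_delete B 0 0 = 1\<^sub>m m"
        by (rule eq_matI, auto simp: B_def mat_delete_def M'_def n_def k_def)
      have h3: "B $$ (0,0) = cofactor A 0 0" by (simp add: B_def mat_delete_def M'_def n_def k_def)
      have h4: "cofactor B 0 0 = 1" unfolding cofactor_def h2 by simp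
      show ?thesis using h1 h3 h4 B_def by simp
    qed
    have D2: "det (mat_delete M' 0 k) = (-1)^m * cofactor A 0 k"
    proof -
      define B where "B = mat_delete M' 0 k"
      have Bc: "B \<in> carrier_mat k k" unfolding B_def using M'c by (auto simp: n_def k_def mat_delete_def)
      have h1: "det B = B $$ (m,0) * cofactor B m 0"
        by (rule det_single_row[OF Bc], auto simp: B_def k_def mat_delete_def M'_def n_def)
      have h2: "mat_delete B m 0 = 1\<^sub>m m"
        by (rule eq_matI, auto simp: B_def mat_delete_def M'_def n_def k_def)
      have h3: "B $$ (m,0) = cofactor A 0 k" by (simp add: B_def mat_delete_def M'_def n_def k_def)
      have h4: "cofactor B m 0 = (-1)^m" unfolding cofactor_def h2 by simp
      show ?thesis using h1 h3 h4 B_def by simp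
    qed
    have "det M' = M' $$ (0,k) * ((-1)^k * ((-1)^m * cofactor A 0 k))
       + M' $$ (k,k) * ((-1)^(k+k) * cofactor A 0 0)" unfolding E by (simp add: cofactor_def D1 D2)
    also have "\<dots> = cofactor A k 0 * ((-1)^k * ((-1)^m * cofactor A 0 k))
       + cofactor A k k * cofactor A 0 0" by (simp add: M'_def n_def k_def power_add)
    finally show ?thesis
      by (simp add: cofactor_def k_def power_add algebra_simps)
  qed
  have "det A * det M' = det P" using det_mult[OF An M'c] AP by simp
  thus ?thesis unfolding dM' dP d_def .
qed


lemma map_mat_delete: "map_mat f (mat_delete A i j) = mat_delete (map_mat f A) i j"
  by (rule eq_matI, auto simp: mat_delete_def)

lemma map_center: "m < dim_row A \<Longrightarrow> m < dim_col A \<Longrightarrow> map_mat f (center A m) = center (map_mat f A) m"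
  by (rule eq_matI, auto simp: center_def)

lemma DJ:
  fixes A :: "'a :: field mat"
  assumes A: "A \<in> carrier_mat (Suc (Suc m)) (Suc (Suc m))"
  shows "det (mat_delete A 0 0) * det (mat_delete A (Suc m) (Suc m))
          - det (mat_delete A 0 (Suc m)) * det (mat_delete A (Suc m) 0)
         = det A * det (center A m)"
proof -
  define B where "B = char_poly_matrix (-A)"
  have mA: "-A \<in> carrier_mat (Suc (Suc m)) (Suc (Suc m))" using A by simp
  have Bc: "B \<in> carrier_mat (Suc (Suc m)) (Suc (Suc m))" unfolding B_def using mA by simp
  have "coeff (char_poly (-A)) (Suc (Suc m)) = 1" using degree_monic_char_poly[OF mA] by simp
  hence nz: "det B \<noteq> 0" unfolding B_def char_poly_def by auto
  from DJ_weak[OF Bc] have "det B * (det (mat_delete B 0 0) * det (mat_delete B (Suc m) (Suc m))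
          - det (mat_delete B 0 (Suc m)) * det (mat_delete B (Suc m) 0))
         = det B * (det B * det (center B m))" by (simp add: power2_eq_square)
  hence E: "det (mat_delete B 0 0) * det (mat_delete B (Suc m) (Suc m))
          - det (mat_delete B 0 (Suc m)) * det (mat_delete B (Suc m) 0)
         = det B * det (center B m)" using nz by simp
  have hr: "comm_ring_hom (\<lambda>p. poly p (0::'a))" by (unfold_locales, auto)
  note hd = comm_ring_hom.hom_det[OF hr]
  have hB: "map_mat (\<lambda>p. poly p 0) B = A"
    by (rule eq_matI, insert A, auto simp: B_def char_poly_matrix_def)
  have "poly (det (mat_delete B 0 0) * det (mat_delete B (Suc m) (Suc m))
          - det (mat_delete B 0 (Suc m)) * det (mat_delete B (Suc m) 0)) 0
       = poly (det B * det (center B m)) 0" unfolding E ..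
  thus ?thesis
    using Bc hB map_center[of m B "\<lambda>p. poly p 0"]
    by (simp del: hd add: hd[symmetric] map_mat_delete)
qed


lemma hankel_DJ:
  fixes R :: "nat \<Rightarrow> int \<Rightarrow> 'a :: field"
  shows "hankel_det R (Suc m) (n+1) * hankel_det R (Suc m) (n-1) - hankel_det R (Suc m) n ^ 2
       = hankel_det R (Suc (Suc m)) n * hankel_det R m n"
proof -
  define A where "A = mat (Suc (Suc m)) (Suc (Suc m)) (\<lambda>(i, j). R 1 (n + int i + int j + 1 - int (Suc (Suc m))))"
  have Ac: "A \<in> carrier_mat (Suc (Suc m)) (Suc (Suc m))" unfolding A_def by simp
  have e1: "mat_delete A 0 0 = mat (Suc m) (Suc m) (\<lambda>(i, j). R 1 ((n+1) + int i + int j + 1 - int (Suc m)))"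
    by (rule eq_matI, auto simp: A_def mat_delete_def algebra_simps)
  have e2: "mat_delete A (Suc m) (Suc m) = mat (Suc m) (Suc m) (\<lambda>(i, j). R 1 ((n-1) + int i + int j + 1 - int (Suc m)))"
    by (rule eq_matI, auto simp: A_def mat_delete_def algebra_simps)
  have e3: "mat_delete A 0 (Suc m) = mat (Suc m) (Suc m) (\<lambda>(i, j). R 1 (n + int i + int j + 1 - int (Suc m)))"
    by (rule eq_matI, auto simp: A_def mat_delete_def algebra_simps)
  have e4: "mat_delete A (Suc m) 0 = mat (Suc m) (Suc m) (\<lambda>(i, j). R 1 (n + int i + int j + 1 - int (Suc m)))"
    by (rule eq_matI, auto simp: A_def mat_delete_def algebra_simps)
  have e5: "center A m = mat m m (\<lambda>(i, j). R 1 (n + int i + int j + 1 - int m))"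
    by (rule eq_matI, auto simp: A_def center_def algebra_simps)
  show ?thesis using DJ[OF Ac] unfolding e1 e2 e3 e4 e5 hankel_det_def A_def[symmetric]
    by (simp add: power2_eq_square)
qed

theorem mainTheorem1:
  fixes r :: nat and R :: "nat \<Rightarrow> int \<Rightarrow> 'a::field_char_0"
  assumes "r \<ge> 1"
    and "alg_indep_Q (\<lambda>(a, m). R a m) ({1..r} \<times> {0, 1})"
    and "is_Q_system r R"
  shows "(\<forall>a n. 1 \<le> a \<and> a \<le> r + 1 \<longrightarrow> R a n = hankel_det R a n) \<and>
         (\<forall>n. det (mat (r + 1) (r + 1) (\<lambda>(i, j). R 1 (n + int i + int j - int r))) = 1)"
proof -
  note Q = assms(3)[unfolded is_Q_system_def]
  have main: "\<forall>n. R a n = hankel_det R a n" if "a \<le> r + 1" for a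
    using that
  proof (induction a rule: less_induct)
    case (less a)
    show ?case
    proof (cases a)
      case 0
      then show ?thesis using Q by (simp add: hankel_det_def)
    next
      case (Suc b)
      show ?thesis
      proof (cases b)
        case 0
        then show ?thesis using Suc by (simp add: hankel_det_def det_single)
      next
        case (Suc m)
        have IH1: "\<And>n. R m n = hankel_det R m n" using less Suc \<open>a = Suc b\<close> by auto
        have IH2: "\<And>n. R (Suc m) n = hankel_det R (Suc m) n" using less Suc \<open>a = Suc b\<close> by auto
        show ?thesis
        proof
          fix n
          have rec: "R (Suc m) (n + 1) * R (Suc m) (n - 1) = (R (Suc m) n)^2 + R (Suc m + 1) n * R (Suc m - 1) n"
            using Q less.prems Suc \<open>a = Suc b\<close> by auto
          have nz: "R m n \<noteq> 0" using Q less.prems Suc \<open>a = Suc b\<close> by auto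
          have "R a n * R m n = hankel_det R a n * R m n"
            using rec hankel_DJ[of R m n] unfolding IH1[symmetric] IH2[symmetric]
            using Suc \<open>a = Suc b\<close> by (simp add: algebra_simps)
          thus "R a n = hankel_det R a n" using nz by simp
        qed
      qed
    qed
  qed
  show ?thesis
  proof (intro conjI allI impI)
    fix a n assume "1 \<le> a \<and> a \<le> r + 1"
    thus "R a n = hankel_det R a n" using main by auto
  next
    fix n
    have "mat (r + 1) (r + 1) (\<lambda>(i, j). R 1 (n + int i + int j - int r))
        = mat (r + 1) (r + 1) (\<lambda>(i, j). R 1 (n + int i + int j + 1 - int (r+1)))"
      by (rule cong_mat, auto simp: algebra_simps)
    hence "det (mat (r + 1) (r + 1) (\<lambda>(i, j). R 1 (n + int i + int j - int r))) = hankel_det R (r+1) n"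
      unfolding hankel_det_def by simp
    also have "\<dots> = R (r+1) n" using main by simp
    also have "\<dots> = 1" using Q by simp
    finally show "det (mat (r + 1) (r + 1) (\<lambda>(i, j). R 1 (n + int i + int j - int r))) = 1" .
  qed
qed

end
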